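(* Let $P=P(G,[\omega])$ be a toric poset over $V$, and let $S\subseteq V$ be nonempty and either a toric interval $[i,j]^{\mathrm{tor}}$ of $P$ or a geometric toric antichain of $P$. Then the partition $\pi_S=\{S\}\cup\{\{v\}:v\in V\setminus S\}$ is closed with respect to $P$; that is, contracting $S$ defines a toric (quotient) morphism.
   Context: Toric poset setup: $V=[n]$; $\mathrm{Acyc}(G)$ acyclic orientations; $[\omega]$ the class under the equivalence generated by converting a source into a sink; toric chambers (components of $\mathbb{R}^V/\mathbb{Z}^V$ minus the hyperplanes $\{x_i\equiv x_j\bmod 1\}$, $\{i,j\}\in E$) correspond bijectively to classes $[\omega]$; $P(G,[\omega])$ is identified with its chamber $c(P)$. $D_\pi$, $D^{\mathrm{tor}}_\pi$ as usual ($x_i=x_j$ for $i,j$ in common blocks). Toric closure $\mathrm{cl}^{\mathrm{tor}}_P(\pi)$: coarsest $\bar\pi\ge\pi$ with $\overline{c(P)}\cap D^{\mathrm{tor}}_{\bar\pi}=\overline{c(P)}\cap D^{\mathrm{tor}}_\pi$; closed means $\pi=\mathrm{cl}^{\mathrm{tor}}_P(\pi)$; toric quotient morphisms are projections onto $D^{\mathrm{tor}}_\pi$ for closed $\pi$. Toric chain: $C=\{i_1,\dots,i_m\}$ with a cyclic class $[(i_1,\dots,i_m)]$ such that every $x\in c(P)$ (coordinates in $[0,1)$) has a cyclic shift $(j_1,\dots,j_m)$ with $0\le x_{j_1}<\dots<x_{j_m}<1$; $P|_C$ denotes this class. Toric interval: $[i,i]^{\mathrm{tor}}=\{i\}$;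 for $i\neq j$, empty if $\{i,j\}$ is not a toric chain, else $\{i,j\}\cup\{k:P|_{\{i,j,k\}}=[(i,k,j)]\}$. Geometric toric antichain: $A\subseteq V$ such that $D^{\mathrm{tor}}_{\pi_A}$ intersects the open chamber $c(P)$. *)

theory Defs
  imports "HOL-Analysis.Analysis" "HOL-Library.Disjoint_Sets"
begin

text \<open>Vertex set V is the finite type 'n (V = UNIV). A graph G is a symmetric irreflexive
edge relation E. Points of the torus R^V/Z^V are represented by their lifts in real^'n;
every torus-subset is represented by its (Z^V-invariant) preimage in real^'n.\<close>

definition int_vecs :: "(real^'n) set" where
  "int_vecs = {z. \<forall>i. z $ i \<in> \<int>}"

definition graph_complement :: "('n \<Rightarrow> 'n \<Rightarrow> bool) \<Rightarrow> (real^'n) set" where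
  "graph_complement E = {x. \<forall>i j. E i j \<longrightarrow> x $ i - x $ j \<notin> \<int>}"

text \<open>Preimage in real^'n of a toric chamber of G (a connected component of the torus minus
the toric graphic arrangement); it is the union of all Z^V-translates of a component of the
preimage of the complement.\<close>
definition toric_chamber :: "('n::finite \<Rightarrow> 'n \<Rightarrow> bool) \<Rightarrow> (real^'n) set \<Rightarrow> bool" where
  "toric_chamber E c \<longleftrightarrow> (\<exists>C \<in> components (graph_complement E).
      c = (\<Union>z\<in>int_vecs. (\<lambda>x. x + z) ` C))"

definition D_tor :: "'n set set \<Rightarrow> (real^'n) set" where
  "D_tor \<pi> = {x. \<forall>B\<in>\<pi>. \<forall>i\<in>B. \<forall>j\<in>B. x $ i - x $ j \<in> \<int>}"

definition coarser_eq :: "'n set set \<Rightarrow> 'n set set \<Rightarrow> bool" where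
  "coarser_eq \<pi> \<pi>' \<longleftrightarrow> (\<forall>B\<in>\<pi>. \<exists>B'\<in>\<pi>'. B \<subseteq> B')"

definition toric_closure :: "(real^'n) set \<Rightarrow> 'n set set \<Rightarrow> 'n set set" where
  "toric_closure c \<pi> = (THE \<sigma>.
      partition_on UNIV \<sigma> \<and> coarser_eq \<pi> \<sigma> \<and> closure c \<inter> D_tor \<sigma> = closure c \<inter> D_tor \<pi> \<and>
      (\<forall>\<tau>. partition_on UNIV \<tau> \<and> coarser_eq \<pi> \<tau> \<and> closure c \<inter> D_tor \<tau> = closure c \<inter> D_tor \<pi>
            \<longrightarrow> coarser_eq \<tau> \<sigma>))"

definition toric_closed :: "(real^'n) set \<Rightarrow> 'n set set \<Rightarrow> bool" where
  "toric_closed c \<pi> \<longleftrightarrow> \<pi> = toric_closure c \<pi>"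

text \<open>The (distinct) list cs represents a cyclic order [cs] such that every x in c with
coordinates in [0,1) has a cyclic shift of cs along which x strictly increases.
Thus P|_(set cs) = [cs]. (The condition is invariant under rotation of cs.)\<close>
definition toric_chain_order :: "(real^'n) set \<Rightarrow> 'n list \<Rightarrow> bool" where
  "toric_chain_order c cs \<longleftrightarrow> distinct cs \<and>
     (\<forall>x\<in>c. (\<forall>i. 0 \<le> x $ i \<and> x $ i < 1) \<longrightarrow>
        (\<exists>k. sorted_wrt (\<lambda>a b. x $ a < x $ b) (rotate k cs)))"

definition toric_chain :: "(real^'n) set \<Rightarrow> 'n set \<Rightarrow> bool" where
  "toric_chain c C \<longleftrightarrow> (\<exists>cs. set cs = C \<and> toric_chain_order c cs)"

definition toric_interval :: "(real^'n) set \<Rightarrow> 'n \<Rightarrow> 'n \<Rightarrow> 'n set" where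
  "toric_interval c i j =
     (if i = j then {i}
      else if \<not> toric_chain c {i, j} then {}
      else {i, j} \<union> {k. toric_chain_order c [i, k, j]})"

definition pi_of :: "'n set \<Rightarrow> 'n set set" where
  "pi_of S = {S} \<union> {{v} | v. v \<notin> S}"

definition geometric_toric_antichain :: "(real^'n) set \<Rightarrow> 'n set \<Rightarrow> bool" where
  "geometric_toric_antichain c A \<longleftrightarrow> D_tor (pi_of A) \<inter> c \<noteq> {}"

end

theory Submission
  imports Defs
begin

lemma int_small: "(r::real) \<in> \<int> \<Longrightarrow> \<bar>r\<bar> < 1 \<Longrightarrow> r = 0"
  by (elim Ints_cases) auto

lemma open_gc: "open (graph_complement (E :: 'n::finite \<Rightarrow> 'n \<Rightarrow> bool))"
proof -
  have eq: "graph_complement E = (\<Inter>p\<in>{p. E (fst p) (snd p)}. {x::real^'n. x$(fst p) - x$(snd p) \<notin> \<int>})"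
    by (auto simp: graph_complement_def)
  have "open {x::real^'n. x$(fst p) - x$(snd p) \<notin> \<int>}" for p
  proof -
    have "closed ((\<lambda>x::real^'n. x$(fst p) - x$(snd p)) -` \<int>)"
      by (intro continuous_closed_vimage continuous_intros) simp
    then have "open (- ((\<lambda>x::real^'n. x$(fst p) - x$(snd p)) -` \<int>))" by (rule open_Compl)
    moreover have "- ((\<lambda>x::real^'n. x$(fst p) - x$(snd p)) -` \<int>) = {x::real^'n. x$(fst p) - x$(snd p) \<notin> \<int>}" by auto
    ultimately show ?thesis by simp
  qed
  then show ?thesis unfolding eq by (intro open_INT) auto
qed

lemma gc_shift_int: "x \<in> graph_complement E \<Longrightarrow> z \<in> int_vecs \<Longrightarrow> x + z \<in> graph_complement E"
proof (unfold graph_complement_def int_vecs_def, safe)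
  fix i j assume A: "\<forall>i j. E i j \<longrightarrow> x $ i - x $ j \<notin> \<int>" "\<forall>i. z $ i \<in> \<int>" "E i j"
    "(x + z) $ i - (x + z) $ j \<in> \<int>"
  have "(x + z) $ i - (x + z) $ j - (z$i - z$j) \<in> \<int>"
    using Ints_diff[OF A(4) Ints_diff[of "z$i" "z$j"]] A(2) by blast
  moreover have "(x + z) $ i - (x + z) $ j - (z$i - z$j) = x$i - x$j" by simp
  ultimately show False using A by auto
qed

lemma chamber_sub: "toric_chamber E c \<Longrightarrow> c \<subseteq> graph_complement E"
  unfolding toric_chamber_def using in_components_subset gc_shift_int by fastforce

lemma chamber_conn:
  assumes "toric_chamber E c" "connected T" "T \<subseteq> graph_complement E" "x \<in> T" "x \<in> c"
  shows "T \<subseteq> c"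
proof -
  have "\<exists>C \<in> components (graph_complement E). c = (\<Union>z\<in>int_vecs. (\<lambda>x. x + z) ` C)"
    using assms(1) unfolding toric_chamber_def .
  then obtain C where C: "C \<in> components (graph_complement E)" and c: "c = (\<Union>z\<in>int_vecs. (\<lambda>x. x + z) ` C)"
    by (rule bexE)
  have "x \<in> (\<Union>z\<in>int_vecs. (\<lambda>x. x + z) ` C)" using assms(5) c by simp
  then obtain z where z1: "z \<in> int_vecs" and xz: "x \<in> (\<lambda>x. x + z) ` C" by (rule UN_E)
  from xz obtain w where z2: "w \<in> C" and z3: "x = w + z" by (rule imageE)
  have mz: "- z \<in> int_vecs" using z1 by (auto simp: int_vecs_def)
  let ?T = "(\<lambda>y. y + - z) ` T"
  have "continuous_on T (\<lambda>y. y + - z)" by (rule continuous_on_add[OF continuous_on_id continuous_on_const])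
  then have cT: "connected ?T" using assms(2) by (rule connected_continuous_image)
  have sT: "?T \<subseteq> graph_complement E"
  proof
    fix u assume "u \<in> ?T"
    then obtain y where "y \<in> T" "u = y + - z" by (rule imageE)
    then show "u \<in> graph_complement E" using assms(3) gc_shift_int[OF _ mz] by blast
  qed
  have wT: "w \<in> ?T"
  proof (rule image_eqI[where x=x])
    have "x + - z = w + (z + - z)" unfolding z3 by (rule add.assoc)
    also have "\<dots> = w" by simp
    finally show "w = x + - z" by (rule sym)
  qed (rule assms(4))
  have ne: "C \<inter> ?T \<noteq> {}" using wT z2 by blast
  have TC: "?T \<subseteq> C" by (rule components_maximal[OF C cT sT ne])
  show ?thesis
  proof
    fix y assume y: "y \<in> T"
    then have "y + - z \<in> C" using TC by blast
    moreover have "y = (y + - z) + z" by simp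
    ultimately have "y \<in> (\<lambda>x. x + z) ` C" by (rule rev_image_eqI)
    then show "y \<in> c" unfolding c using z1 by blast
  qed
qed

lemma chamber_int: "toric_chamber E c \<Longrightarrow> x \<in> c \<Longrightarrow> z \<in> int_vecs \<Longrightarrow> x + z \<in> c"
proof -
  assume a: "toric_chamber E c" "x \<in> c" "z \<in> int_vecs"
  have "\<exists>C \<in> components (graph_complement E). c = (\<Union>z\<in>int_vecs. (\<lambda>x. x + z) ` C)"
    using a(1) unfolding toric_chamber_def .
  then obtain C where C: "C \<in> components (graph_complement E)" and c: "c = (\<Union>z\<in>int_vecs. (\<lambda>x. x + z) ` C)"
    by (rule bexE)
  have "x \<in> (\<Union>z\<in>int_vecs. (\<lambda>x. x + z) ` C)" using a(2) c by simp
  then obtain z' where z1: "z' \<in> int_vecs" and xz: "x \<in> (\<lambda>x. x + z') ` C" by (rule UN_E)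
  from xz obtain w where z2: "w \<in> C" and z3: "x = w + z'" by (rule imageE)
  have zz: "z' + z \<in> int_vecs" using z1 a(3) by (auto simp: int_vecs_def)
  have "x + z = w + (z' + z)" unfolding z3 by (rule add.assoc)
  then have "x + z \<in> (\<lambda>x. x + (z' + z)) ` C" using z2 by blast
  then show ?thesis unfolding c using zz by blast
qed

lemma chamber_open: "toric_chamber E c \<Longrightarrow> x \<in> c \<Longrightarrow> \<exists>e>0. ball x e \<subseteq> c"
proof -
  assume a: "toric_chamber E c" "x \<in> c"
  then have xG: "x \<in> graph_complement E" using chamber_sub by blast
  obtain e where e: "e > 0" "ball x e \<subseteq> graph_complement E"
    using open_gc[of E] xG unfolding open_contains_ball by blast
  have "x \<in> ball x e" using e(1) by simp
  then have "ball x e \<subseteq> c" by (rule chamber_conn[OF a(1) connected_ball e(2) _ a(2)])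
  then show ?thesis using e(1) by blast
qed

lemma chamber_nonempty: "toric_chamber E c \<Longrightarrow> c \<noteq> {}"
proof -
  assume a: "toric_chamber E c"
  obtain C where C: "C \<in> components (graph_complement E)" and c: "c = (\<Union>z\<in>int_vecs. (\<lambda>x. x + z) ` C)"
    using a unfolding toric_chamber_def by blast
  have "0 \<in> int_vecs" by (simp add: int_vecs_def)
  then show ?thesis using in_components_nonempty[OF C] c by auto
qed

lemma chamber_diag: "toric_chamber E c \<Longrightarrow> x \<in> c \<Longrightarrow> x + (\<chi> k. s) \<in> c"
proof -
  assume a: "toric_chamber E c" "x \<in> c"
  define v :: "real^'a" where "v = (\<chi> k. 1)"
  let ?T = "(\<lambda>r. x + r *\<^sub>R v) ` UNIV"
  have cont: "continuous_on UNIV (\<lambda>r. x + r *\<^sub>R v)"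
    by (rule continuous_on_add[OF continuous_on_const continuous_on_scaleR[OF continuous_on_id continuous_on_const]])
  have cT: "connected ?T" by (rule connected_continuous_image[OF cont connected_UNIV])
  have xG: "x \<in> graph_complement E" using chamber_sub[OF a(1)] a(2) by blast
  have sT: "?T \<subseteq> graph_complement E"
  proof
    fix u assume "u \<in> ?T"
    then obtain r where u: "u = x + r *\<^sub>R v" by blast
    have "u $ p - u $ q = x $ p - x $ q" for p q unfolding u v_def by simp
    then show "u \<in> graph_complement E" using xG unfolding graph_complement_def by simp
  qed
  have xT: "x \<in> ?T" by (rule image_eqI[where x=0]) simp_all
  have "?T \<subseteq> c" by (rule chamber_conn[OF a(1) cT sT xT a(2)])
  moreover have "x + (\<chi> k. s) = x + s *\<^sub>R v" unfolding v_def by (simp add: vec_eq_iff)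
  ultimately show ?thesis by blast
qed

lemma D_tor_pi: "y \<in> D_tor (pi_of S) \<longleftrightarrow> (\<forall>k\<in>S. \<forall>l\<in>S. y$k - y$l \<in> \<int>)"
  by (auto simp: D_tor_def pi_of_def)

lemma partition_pi: "S \<noteq> {} \<Longrightarrow> partition_on UNIV (pi_of S)"
  unfolding partition_on_def pi_of_def disjoint_def by auto

lemma coarser_refl: "coarser_eq \<pi> \<pi>"
  by (auto simp: coarser_eq_def)

lemma part_same:
  assumes "partition_on A P" "B \<in> P" "B' \<in> P" "x \<in> B" "x \<in> B'" shows "B = B'"
  using assms unfolding partition_on_def disjoint_def by blast

lemma coarser_antisym:
  assumes "partition_on A P" "partition_on A Q" "coarser_eq P Q" "coarser_eq Q P"
  shows "P = Q"
proof -
  have *: "X \<subseteq> Y" if h: "partition_on A X" "partition_on A Y" "coarser_eq X Y" "coarser_eq Y X" for X Y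
  proof
    fix B assume B: "B \<in> X"
    obtain B' where B': "B' \<in> Y" "B \<subseteq> B'" using h(3) B by (auto simp: coarser_eq_def)
    obtain B'' where B'': "B'' \<in> X" "B' \<subseteq> B''" using h(4) B' by (auto simp: coarser_eq_def)
    have "B \<noteq> {}" using h(1) B by (auto simp: partition_on_def)
    then obtain x where "x \<in> B" by blast
    then have "B = B''" using part_same[OF h(1) B B''(1)] B' B'' by blast
    then show "B \<in> Y" using B' B'' by (metis subset_antisym)
  qed
  show ?thesis using *[OF assms] *[OF assms(2,1,4,3)] by blast
qed

lemma key_coarser:
  assumes S: "S \<noteq> {}"
    and sep: "\<And>v w. v \<notin> S \<Longrightarrow> w \<noteq> v \<Longrightarrow> \<exists>y \<in> closure c \<inter> D_tor (pi_of S). y$v - y$w \<notin> \<int>"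
    and tau: "partition_on UNIV \<tau>" "coarser_eq (pi_of S) \<tau>"
      "closure c \<inter> D_tor \<tau> = closure c \<inter> D_tor (pi_of S)"
  shows "coarser_eq \<tau> (pi_of S)"
  unfolding coarser_eq_def
proof
  fix B assume B: "B \<in> \<tau>"
  obtain B0 where B0: "B0 \<in> \<tau>" "S \<subseteq> B0" using tau(2) by (auto simp: coarser_eq_def pi_of_def)
  have inD: "y$a - y$b \<in> \<int>" if "y \<in> closure c \<inter> D_tor (pi_of S)" "a \<in> B" "b \<in> B" for y a b
  proof -
    have "y \<in> D_tor \<tau>" using that(1) tau(3) by blast
    then show ?thesis using B that by (auto simp: D_tor_def)
  qed
  show "\<exists>B'\<in>pi_of S. B \<subseteq> B'"
  proof (rule ccontr)
    assume nb: "\<not> (\<exists>B'\<in>pi_of S. B \<subseteq> B')"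
    show False
    proof (cases "B \<inter> S = {}")
      case False
      then obtain s where s: "s \<in> B" "s \<in> S" by blast
      then have "B = B0" using part_same[OF tau(1) B B0(1)] B0 by blast
      moreover have "\<not> B \<subseteq> S" using nb by (auto simp: pi_of_def)
      ultimately obtain v where v: "v \<in> B" "v \<notin> S" by blast
      obtain y where "y \<in> closure c \<inter> D_tor (pi_of S)" "y$v - y$s \<notin> \<int>"
        using sep[OF v(2), of s] s v by blast
      then show False using inD v s by blast
    next
      case True
      have "B \<noteq> {}" using tau(1) B by (auto simp: partition_on_def)
      then obtain u where u: "u \<in> B" by blast
      have "\<not> B \<subseteq> {u}" using nb u True by (auto simp: pi_of_def)
      then obtain w where w: "w \<in> B" "w \<noteq> u" by blast
      obtain y where "y \<in> closure c \<inter> D_tor (pi_of S)" "y$u - y$w \<notin> \<int>"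
        using sep[of u w] u w True by blast
      then show False using inD u w by blast
    qed
  qed
qed

lemma closed_if_sep:
  assumes S: "S \<noteq> {}"
    and sep: "\<And>v w. v \<notin> S \<Longrightarrow> w \<noteq> v \<Longrightarrow> \<exists>y \<in> closure c \<inter> D_tor (pi_of S). y$v - y$w \<notin> \<int>"
  shows "toric_closed c (pi_of S)"
proof -
  have "toric_closure c (pi_of S) = pi_of S"
    unfolding toric_closure_def
  proof (rule the_equality)
    show "partition_on UNIV (pi_of S) \<and> coarser_eq (pi_of S) (pi_of S) \<and>
      closure c \<inter> D_tor (pi_of S) = closure c \<inter> D_tor (pi_of S) \<and>
      (\<forall>\<tau>. partition_on UNIV \<tau> \<and> coarser_eq (pi_of S) \<tau> \<and> closure c \<inter> D_tor \<tau> = closure c \<inter> D_tor (pi_of S)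
            \<longrightarrow> coarser_eq \<tau> (pi_of S))"
      using partition_pi[OF S] coarser_refl key_coarser[OF S sep] by blast
  next
    fix \<sigma> assume a: "partition_on UNIV \<sigma> \<and> coarser_eq (pi_of S) \<sigma> \<and>
      closure c \<inter> D_tor \<sigma> = closure c \<inter> D_tor (pi_of S) \<and>
      (\<forall>\<tau>. partition_on UNIV \<tau> \<and> coarser_eq (pi_of S) \<tau> \<and> closure c \<inter> D_tor \<tau> = closure c \<inter> D_tor (pi_of S)
            \<longrightarrow> coarser_eq \<tau> \<sigma>)"
    then have "coarser_eq \<sigma> (pi_of S)" using key_coarser[OF S sep] by blast
    then show "\<sigma> = pi_of S" using coarser_antisym[OF _ partition_pi[OF S]] a by blast
  qed
  then show ?thesis by (simp add: toric_closed_def)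
qed

definition upd :: "real^'n \<Rightarrow> 'n \<Rightarrow> real \<Rightarrow> real^'n" where
  "upd x v t = (\<chi> k. if k = v then t else x$k)"

lemma upd_nth[simp]: "upd x v t $ k = (if k = v then t else x$k)"
  by (simp add: upd_def)

lemma dist_upd: "dist (upd x v t) x \<le> \<bar>t - x$v\<bar>"
proof -
  have "dist (upd x v t) x = norm (upd x v t - x)" by (simp add: dist_norm)
  also have "\<dots> \<le> (\<Sum>k\<in>UNIV. \<bar>(upd x v t - x)$k\<bar>)" by (rule norm_le_l1_cart)
  also have "\<dots> = (\<Sum>k\<in>UNIV. if k = v then \<bar>t - x$v\<bar> else 0)"
    by (intro sum.cong) auto
  also have "\<dots> = \<bar>t - x$v\<bar>" by simp
  finally show ?thesis .
qed

lemma two_points: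
  assumes "0 < d" "d < 1" "(a::real) + p \<in> \<int>" "a + (p + d) \<in> \<int>" shows False
proof -
  have "(a + (p + d)) - (a + p) \<in> \<int>" using assms by (intro Ints_diff)
  then have "d \<in> \<int>" by simp
  then show False using int_small[of d] assms by auto
qed

lemma antichain_sep:
  assumes ch: "toric_chamber E c" and ac: "geometric_toric_antichain c S" and v: "v \<notin> S" and w: "w \<noteq> v"
  shows "\<exists>y \<in> closure c \<inter> D_tor (pi_of S). y$v - y$w \<notin> \<int>"
proof -
  obtain x where x: "x \<in> D_tor (pi_of S)" "x \<in> c" using ac by (auto simp: geometric_toric_antichain_def)
  obtain e where e: "e > 0" "ball x e \<subseteq> c" using chamber_open[OF ch x(2)] by blast
  define d where "d = min e 1 / 3"
  have d: "0 < d" "d < 1" "2 * d < e" using e(1) by (auto simp: d_def)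
  have good: "upd x v (x$v + t) \<in> closure c \<inter> D_tor (pi_of S)" if "0 < t" "t < e" for t
  proof -
    have "dist (upd x v (x$v + t)) x < e" using dist_upd[of x v "x$v + t"] that by auto
    then have "upd x v (x$v + t) \<in> c" using e by (auto simp: dist_commute)
    moreover have "upd x v (x$v + t) \<in> D_tor (pi_of S)" using x(1) v unfolding D_tor_pi
      by (metis upd_nth)
    ultimately show ?thesis using closure_subset by blast
  qed
  show ?thesis
  proof (rule ccontr)
    assume na: "\<not> ?thesis"
    have g1: "upd x v (x$v + d) \<in> closure c \<inter> D_tor (pi_of S)" using good[of d] d by auto
    have g2: "upd x v (x$v + (d+d)) \<in> closure c \<inter> D_tor (pi_of S)" using good[of "d+d"] d by auto
    have "upd x v (x$v + d) $ v - upd x v (x$v + d) $ w \<in> \<int>"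
      using na g1 by blast
    moreover have "upd x v (x$v + (d+d)) $ v - upd x v (x$v + (d+d)) $ w \<in> \<int>"
      using na g2 by blast
    ultimately have "(x$v - x$w) + d \<in> \<int>" "(x$v - x$w) + (d + d) \<in> \<int>" using w
      by (auto simp: algebra_simps)
    then show False using two_points d by blast
  qed
qed


lemma sorted_pair:
  "sorted_wrt (\<lambda>a b. f a < (f b::real)) xs \<Longrightarrow> a \<in> set xs \<Longrightarrow> b \<in> set xs \<Longrightarrow> a \<noteq> b
   \<Longrightarrow> f a < f b \<or> f b < f a"
  by (induction xs) auto

lemma rot1: "rotate 1 [a,b,c] = [b,c,a]" by simp
lemma rot2: "rotate 2 [a,b,c] = [c,a,b]"
proof -
  have "rotate 2 [a,b,c] = rotate1 (rotate1 [a,b,c])" by (simp add: rotate_def numeral_2_eq_2)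
  then show ?thesis by simp
qed
lemma rot3: "rotate r [a,b,c] \<in> {[a,b,c],[b,c,a],[c,a,b]}"
proof -
  have "r mod 3 = 0 \<or> r mod 3 = 1 \<or> r mod 3 = 2" by arith
  moreover have "rotate r [a,b,c] = rotate (r mod 3) [a,b,c]" by (subst rotate_conv_mod) simp
  moreover have "rotate 0 [a,b,c] = [a,b,c]" "rotate 1 [a,b,c] = [b,c,a]" by simp_all
  ultimately show ?thesis using rot2 by (metis insertCI)
qed

definition Nset :: "(real^'n) set \<Rightarrow> 'n \<Rightarrow> real^'n \<Rightarrow> bool" where
  "Nset c i x \<longleftrightarrow> x \<in> c \<and> x$i = 0 \<and> (\<forall>k. 0 \<le> x$k \<and> x$k < 1)"

lemma L_chain:
  assumes "toric_chain c {i,j}" "i \<noteq> j" "Nset c i x" shows "0 < x$j"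
proof -
  obtain cs where cs: "set cs = {i,j}" "toric_chain_order c cs" using assms(1) by (auto simp: toric_chain_def)
  have h: "\<forall>x\<in>c. (\<forall>i. 0 \<le> x $ i \<and> x $ i < 1) \<longrightarrow> (\<exists>k'. sorted_wrt (\<lambda>a b. x $ a < x $ b) (rotate k' cs))"
    using cs(2) unfolding toric_chain_order_def by blast
  have "x \<in> c" "\<forall>i. 0 \<le> x $ i \<and> x $ i < 1" using assms(3) unfolding Nset_def by blast+
  then obtain r where "sorted_wrt (\<lambda>a b. x $ a < x $ b) (rotate r cs)"
    using h by blast
  then have "x$i < x$j \<or> x$j < x$i" using sorted_pair[of "\<lambda>a. x$a" "rotate r cs" i j] cs(1) assms(2) by auto
  moreover have "0 \<le> x$j" "x$i = 0" using assms(3) by (auto simp: Nset_def)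
  ultimately show ?thesis by linarith
qed

lemma CO1:
  assumes "toric_chain_order c [i,k,j]" "Nset c i x" shows "0 < x$k \<and> x$k < x$j"
proof -
  have h: "\<forall>x\<in>c. (\<forall>l. 0 \<le> x $ l \<and> x $ l < 1) \<longrightarrow> (\<exists>k'. sorted_wrt (\<lambda>a b. x $ a < x $ b) (rotate k' [i,k,j]))"
    using assms(1) unfolding toric_chain_order_def by blast
  have "x \<in> c" "\<forall>l. 0 \<le> x $ l \<and> x $ l < 1" using assms(2) unfolding Nset_def by blast+
  then obtain r where r: "sorted_wrt (\<lambda>a b. x $ a < x $ b) (rotate r [i,k,j])"
    using h by blast
  have nn: "0 \<le> x$k" "0 \<le> x$j" "x$i = 0" using assms(2) by (auto simp: Nset_def)
  have "rotate r [i,k,j] = [i,k,j] \<or> rotate r [i,k,j] = [k,j,i] \<or> rotate r [i,k,j] = [j,i,k]"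
    using rot3[of r i k j] by blast
  then show ?thesis
  proof (elim disjE)
    assume eq: "rotate r [i,k,j] = [i,k,j]"
    have "sorted_wrt (\<lambda>a b. x $ a < x $ b) [i,k,j]" using r unfolding eq .
    then show ?thesis using nn by simp
  next
    assume eq: "rotate r [i,k,j] = [k,j,i]"
    have "sorted_wrt (\<lambda>a b. x $ a < x $ b) [k,j,i]" using r unfolding eq .
    then show ?thesis using nn by simp
  next
    assume eq: "rotate r [i,k,j] = [j,i,k]"
    have "sorted_wrt (\<lambda>a b. x $ a < x $ b) [j,i,k]" using r unfolding eq .
    then show ?thesis using nn by simp
  qed
qed

lemma edge_real:
  fixes a b h t :: real
  assumes "0 \<le> a" "a < 1" "0 \<le> b" "b < 1" "a - b \<notin> \<int>" "0 \<le> t" "t < 1"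
  shows "(if a \<le> h then (1-t)*a else a) - (if b \<le> h then (1-t)*b else b) \<notin> \<int>"
proof
  assume ii: "(if a \<le> h then (1-t)*a else a) - (if b \<le> h then (1-t)*b else b) \<in> \<int>"
  have ab: "a \<noteq> b" using assms(5) by auto
  show False
  proof (cases "a \<le> h")
    case ah: True
    show False
    proof (cases "b \<le> h")
      case True
      have eq: "(1-t)*a - (1-t)*b = (1-t)*(a-b)" by (simp add: algebra_simps)
      have "\<bar>(1-t)*(a-b)\<bar> = (1-t)*\<bar>a-b\<bar>" using assms by (simp add: abs_mult)
      also have "\<dots> \<le> \<bar>a - b\<bar>" using assms by (simp add: mult_left_le_one_le)
      also have "\<dots> < 1" using assms by auto
      finally have lt: "\<bar>(1-t)*(a-b)\<bar> < 1" .
      have "(1-t)*(a-b) \<in> \<int>" using ii ah True eq by simp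
      then have "(1-t)*(a-b) = 0" using int_small lt by blast
      then show False using ab assms by auto
    next
      case False
      have h1: "(1-t)*a \<le> a" using assms by (simp add: mult_left_le_one_le)
      have h0: "0 \<le> (1-t)*a" using assms by simp
      have "b - (1-t)*a < 1" "(1-t)*a < b" using h0 h1 False ah assms by linarith+
      then have l1: "\<bar>(1-t)*a - b\<bar> < 1" "(1-t)*a - b \<noteq> 0" by auto
      have "(1-t)*a - b \<in> \<int>" using ii ah False by simp
      then show False using int_small l1 by blast
    qed
  next
    case ah: False
    show False
    proof (cases "b \<le> h")
      case True
      have h1: "(1-t)*b \<le> b" using assms by (simp add: mult_left_le_one_le)
      have h0: "0 \<le> (1-t)*b" using assms by simp
      have "a - (1-t)*b < 1" "(1-t)*b < a" using h0 h1 True ah assms by linarith+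
      then have l1: "\<bar>a - (1-t)*b\<bar> < 1" "a - (1-t)*b \<noteq> 0" by auto
      have "a - (1-t)*b \<in> \<int>" using ii ah True by simp
      then show False using int_small l1 by blast
    next
      case False
      then show False using ii ah assms(5) by auto
    qed
  qed
qed

lemma L_contr:
  assumes ch: "toric_chamber E c" and N: "Nset c i x"
  shows "(\<chi> k. if x$k \<le> x$j then 0 else x$k) \<in> closure c"
proof -
  define d where "d = (\<chi> k. if x$k \<le> x$j then - x$k else (0::real))"
  define g where "g = (\<lambda>t::real. x + t *\<^sub>R d)"
  have gk: "g t $ k = (if x$k \<le> x$j then (1-t)*x$k else x$k)" for t k
    by (simp add: g_def d_def algebra_simps)
  have xG: "x \<in> graph_complement E" using chamber_sub[OF ch] N by (auto simp: Nset_def)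
  have "g ` {0..<1} \<subseteq> graph_complement E"
  proof (clarsimp simp: graph_complement_def)
    fix t :: real and k l assume t: "0 \<le> t" "t < 1" and e: "E k l" and ii: "g t $ k - g t $ l \<in> \<int>"
    have "x$k - x$l \<notin> \<int>" using xG e by (auto simp: graph_complement_def)
    then show False using edge_real[of "x$k" "x$l" t "x$j"] N t ii unfolding gk by (auto simp: Nset_def)
  qed
  then have sT: "g ` {0..<1} \<subseteq> graph_complement E" .
  have gc: "continuous_on A g" for A unfolding g_def
    by (rule continuous_on_add[OF continuous_on_const continuous_on_scaleR[OF continuous_on_id continuous_on_const]])
  have cT: "connected (g ` {0..<1})"
  proof (rule connected_continuous_image)
    show "connected {0..<(1::real)}" by (rule convex_connected) (rule convex_real_interval)
  qed (rule gc)
  have xT: "x \<in> g ` {0..<1}" by (rule image_eqI[where x=0]) (simp_all add: g_def)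
  have xc: "x \<in> c" using N unfolding Nset_def by blast
  have sub: "g ` {0..<1} \<subseteq> c" by (rule chamber_conn[OF ch cT sT xT xc])
  have "g ` closure {0..<1} \<subseteq> closure c"
  proof (rule image_closure_subset)
    show "g ` {0..<1} \<subseteq> closure c" using sub closure_subset by blast
  qed (auto intro: gc)
  moreover have "(1::real) \<in> closure {0..<1}" by simp
  ultimately have "g 1 \<in> closure c" by blast
  moreover have "g 1 = (\<chi> k. if x$k \<le> x$j then 0 else x$k)" by (simp add: vec_eq_iff gk)
  ultimately show ?thesis by simp
qed


lemma L_mem:
  assumes "toric_chain c {i,j}" "i \<noteq> j" "Nset c i x" "k \<in> {i,j} \<union> {k. toric_chain_order c [i,k,j]}"
  shows "x$k \<le> x$j"
proof -
  have "0 < x$j" by (rule L_chain[OF assms(1-3)])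
  moreover have "x$i = 0" using assms(3) by (simp add: Nset_def)
  moreover have "toric_chain_order c [i,k,j] \<Longrightarrow> x$k < x$j" using CO1[OF _ assms(3)] by blast
  ultimately show ?thesis using assms(4) by auto
qed

definition nrm :: "'n \<Rightarrow> real^'n \<Rightarrow> real^'n" where
  "nrm i x1 = (\<chi> k. if x1$i \<le> x1$k then x1$k - x1$i else x1$k - x1$i + 1)"

lemma nrm_N:
  assumes ch: "toric_chamber E c" and x1: "x1 \<in> c" "\<forall>l. 0 \<le> x1$l \<and> x1$l < 1"
  shows "Nset c i (nrm i x1)"
proof -
  define z where "z = (\<chi> k. if x1$i \<le> x1$k then 0 else (1::real))"
  have z: "z \<in> int_vecs" unfolding int_vecs_def z_def by simp
  have "x1 + (\<chi> k. - x1$i) \<in> c" by (rule chamber_diag[OF ch x1(1)])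
  then have "(x1 + (\<chi> k. - x1$i)) + z \<in> c" by (rule chamber_int[OF ch _ z])
  moreover have "(x1 + (\<chi> k. - x1$i)) + z = nrm i x1" unfolding nrm_def z_def by (simp add: vec_eq_iff)
  ultimately have "nrm i x1 \<in> c" by simp
  moreover have "nrm i x1 $ i = 0" by (simp add: nrm_def)
  moreover have "0 \<le> nrm i x1 $ l \<and> nrm i x1 $ l < 1" for l
    using x1(2)[rule_format, of l] x1(2)[rule_format, of i] by (auto simp: nrm_def)
  ultimately show ?thesis by (simp add: Nset_def)
qed

lemma CO2:
  assumes x1: "\<forall>l. 0 \<le> x1$l \<and> x1$l < 1" and h: "0 < nrm i x1 $ v" "nrm i x1 $ v < nrm i x1 $ j"
  shows "\<exists>r. sorted_wrt (\<lambda>a b. x1 $ a < x1 $ b) (rotate r [i,v,j])"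
proof -
  have b: "0 \<le> x1$i" "x1$i < 1" "0 \<le> x1$v" "x1$v < 1" "0 \<le> x1$j" "x1$j < 1" using x1 by auto
  have "(x1$i < x1$v \<and> x1$v < x1$j) \<or> (x1$v < x1$j \<and> x1$j < x1$i) \<or> (x1$j < x1$i \<and> x1$i < x1$v)"
    using h b by (auto simp: nrm_def split: if_splits)
  then show ?thesis
  proof (elim disjE)
    assume "x1$i < x1$v \<and> x1$v < x1$j"
    then have "sorted_wrt (\<lambda>a b. x1 $ a < x1 $ b) (rotate 0 [i,v,j])" by simp
    then show ?thesis by blast
  next
    assume "x1$v < x1$j \<and> x1$j < x1$i"
    then have "sorted_wrt (\<lambda>a b. x1 $ a < x1 $ b) (rotate 1 [i,v,j])" unfolding rot1 by simp
    then show ?thesis by blast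
  next
    assume "x1$j < x1$i \<and> x1$i < x1$v"
    then have "sorted_wrt (\<lambda>a b. x1 $ a < x1 $ b) (rotate 2 [i,v,j])" unfolding rot2 by simp
    then show ?thesis by blast
  qed
qed

lemma upd_ball:
  assumes "ball x e \<subseteq> c" "\<bar>t - x$v\<bar> < e" shows "upd x v t \<in> c"
proof -
  have "dist x (upd x v t) < e" using dist_upd[of x v t] assms(2) by (simp add: dist_commute)
  then show ?thesis using assms(1) by auto
qed

lemma L_R:
  assumes ch: "toric_chamber E c" and chn: "toric_chain c {i,j}" and ij: "i \<noteq> j"
    and v: "v \<notin> {i,j} \<union> {k. toric_chain_order c [i,k,j]}"
  shows "\<exists>x p q. Nset c i x \<and> x$j \<le> p \<and> p < q \<and> q \<le> 1 \<and> (\<forall>t. p < t \<and> t < q \<longrightarrow> upd x v t \<in> c)"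
proof -
  have vi: "v \<noteq> i" "v \<noteq> j" and nco: "\<not> toric_chain_order c [i,v,j]" using v by auto
  have "distinct [i,v,j]" using vi ij by auto
  then obtain x1 where x1: "x1 \<in> c" "\<forall>l. 0 \<le> x1$l \<and> x1$l < 1"
      and ns: "\<forall>r. \<not> sorted_wrt (\<lambda>a b. x1 $ a < x1 $ b) (rotate r [i,v,j])"
    using nco unfolding toric_chain_order_def by blast
  define x where "x = nrm i x1"
  have N: "Nset c i x" unfolding x_def by (rule nrm_N[OF ch x1])
  have nb: "\<not> (0 < x$v \<and> x$v < x$j)" using CO2[OF x1(2)] ns unfolding x_def by blast
  have xj: "0 < x$j" "x$j < 1" using L_chain[OF chn ij N] N by (auto simp: Nset_def)
  have xv: "0 \<le> x$v" "x$v < 1" using N by (auto simp: Nset_def)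
  have xc: "x \<in> c" using N by (simp add: Nset_def)
  obtain e where e: "e > 0" "ball x e \<subseteq> c" using chamber_open[OF ch xc] by blast
  show ?thesis
  proof (cases "x$j \<le> x$v")
    case True
    define p where "p = max (x$j) (x$v - e)"
    define q where "q = min 1 (x$v + e)"
    have "\<forall>t. p < t \<and> t < q \<longrightarrow> upd x v t \<in> c"
    proof (intro allI impI)
      fix t assume "p < t \<and> t < q"
      then have "\<bar>t - x$v\<bar> < e" unfolding p_def q_def by auto
      then show "upd x v t \<in> c" by (rule upd_ball[OF e(2)])
    qed
    moreover have "x$j \<le> p" "p < q" "q \<le> 1" unfolding p_def q_def using True e xj xv by auto
    ultimately show ?thesis using N by blast
  next
    case False
    then have x0: "x$v = 0" using nb xv by auto
    define p where "p = max (x$j) (1 - e)"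
    define q :: real where "q = 1"
    define ev where "ev = (\<chi> k. if k = v then 1 else (0::real))"
    have ev: "ev \<in> int_vecs" unfolding ev_def int_vecs_def by simp
    have "\<forall>t. p < t \<and> t < q \<longrightarrow> upd x v t \<in> c"
    proof (intro allI impI)
      fix t assume "p < t \<and> t < q"
      then have "\<bar>(t - 1) - x$v\<bar> < e" unfolding p_def q_def using x0 by auto
      then have "upd x v (t - 1) \<in> c" by (rule upd_ball[OF e(2)])
      then have "upd x v (t - 1) + ev \<in> c" by (rule chamber_int[OF ch _ ev])
      moreover have "upd x v (t - 1) + ev = upd x v t" unfolding ev_def by (simp add: vec_eq_iff)
      ultimately show "upd x v t \<in> c" by simp
    qed
    moreover have "x$j \<le> p" "p < q" "q \<le> 1" unfolding p_def q_def using e xj by auto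
    ultimately show ?thesis using N by blast
  qed
qed

lemma interval_sep:
  assumes ch: "toric_chamber E c" and chn: "toric_chain c {i,j}" and ij: "i \<noteq> j"
    and S: "S = {i,j} \<union> {k. toric_chain_order c [i,k,j]}"
    and v: "v \<notin> S" and w: "w \<noteq> v"
  shows "\<exists>y \<in> closure c \<inter> D_tor (pi_of S). y$v - y$w \<notin> \<int>"
proof -
  obtain x p q where N: "Nset c i x" and pq: "x$j \<le> p" "p < q" "q \<le> 1"
      and up: "\<forall>t. p < t \<and> t < q \<longrightarrow> upd x v t \<in> c"
    using L_R[OF ch chn ij v[unfolded S]] by blast
  have vi: "v \<noteq> i" "v \<noteq> j" using v S by auto
  have xj: "0 < x$j" using L_chain[OF chn ij N] .
  define K where "K = (if x$w \<le> x$j then 0 else x$w)"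
  define Y where "Y = (\<lambda>t. (\<chi> k. if upd x v t $ k \<le> upd x v t $ j then 0 else upd x v t $ k))"
  have good: "Y t \<in> closure c \<inter> D_tor (pi_of S) \<and> Y t $ v - Y t $ w = t - K" if t: "p < t" "t < q" for t
  proof -
    have Nt: "Nset c i (upd x v t)" using N up t pq xj vi unfolding Nset_def by auto
    have "Y t \<in> closure c" unfolding Y_def by (rule L_contr[OF ch Nt])
    moreover have "Y t \<in> D_tor (pi_of S)" unfolding D_tor_pi
    proof (intro ballI)
      fix k l assume "k \<in> S" "l \<in> S"
      then have "upd x v t $ k \<le> upd x v t $ j" "upd x v t $ l \<le> upd x v t $ j"
        using L_mem[OF chn ij Nt] S by blast+
      then show "Y t $ k - Y t $ l \<in> \<int>" unfolding Y_def by simp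
    qed
    moreover have "Y t $ v - Y t $ w = t - K" unfolding Y_def K_def using vi w t pq by auto
    ultimately show ?thesis by blast
  qed
  define d where "d = (q - p) / 3"
  have d: "0 < d" "d < 1" using pq xj unfolding d_def by auto
  show ?thesis
  proof (rule ccontr)
    assume na: "\<not> ?thesis"
    have "3 * d = q - p" unfolding d_def by simp
    then have tt: "p < p + d" "p + d < q" "p < p + d + d" "p + d + d < q" using d by linarith+
    have g1: "Y (p + d) \<in> closure c \<inter> D_tor (pi_of S)" "Y (p + d) $ v - Y (p + d) $ w = (p + d) - K"
      using good[OF tt(1,2)] by auto
    have g2: "Y (p + d + d) \<in> closure c \<inter> D_tor (pi_of S)" "Y (p + d + d) $ v - Y (p + d + d) $ w = (p + d + d) - K"
      using good[OF tt(3,4)] by auto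
    have "(p + d) - K \<in> \<int>" using na g1 by metis
    moreover have "(p + d + d) - K \<in> \<int>" using na g2 by metis
    ultimately have "(- K) + (p + d) \<in> \<int>" "(- K) + ((p + d) + d) \<in> \<int>" by (simp_all add: algebra_simps)
    then show False using two_points d by blast
  qed
qed

theorem mainTheorem11:
  fixes E :: "'n::finite \<Rightarrow> 'n \<Rightarrow> bool" and c :: "(real^'n) set" and S :: "'n set"
  assumes "\<And>i j. E i j \<Longrightarrow> E j i"
    and "\<And>i. \<not> E i i"
    and "toric_chamber E c"
    and "S \<noteq> {}"
    and "(\<exists>i j. S = toric_interval c i j) \<or> geometric_toric_antichain c S"
  shows "toric_closed c (pi_of S)"
proof -
  have ac_case: "toric_closed c (pi_of S)" if ac: "geometric_toric_antichain c S"
    by (rule closed_if_sep[OF assms(4)]) (rule antichain_sep[OF assms(3) ac])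
  show ?thesis
  proof (cases "geometric_toric_antichain c S")
    case True then show ?thesis by (rule ac_case)
  next
    case False
    then obtain i j where S: "S = toric_interval c i j" using assms(5) by blast
    show ?thesis
    proof (cases "i = j")
      case True
      then have S1: "S = {i}" using S by (simp add: toric_interval_def)
      have "D_tor (pi_of S) = UNIV" unfolding S1 by (auto simp: D_tor_pi)
      then have "geometric_toric_antichain c S"
        using chamber_nonempty[OF assms(3)] by (simp add: geometric_toric_antichain_def)
      then show ?thesis by (rule ac_case)
    next
      case ij: False
      have chn: "toric_chain c {i,j}"
      proof (rule ccontr)
        assume "\<not> toric_chain c {i,j}"
        then have "S = {}" using S ij by (simp add: toric_interval_def)
        then show False using assms(4) by simp
      qed
      have S': "S = {i,j} \<union> {k. toric_chain_order c [i,k,j]}" using S ij chn by (simp add: toric_interval_def)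
      show ?thesis
        by (rule closed_if_sep[OF assms(4)]) (rule interval_sep[OF assms(3) chn ij S'])
    qed
  qed
qed

end
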